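(* Let $\{q_k:k\ge0\}$ be a non-decreasing sequence of nonnegative numbers with $q_0>0$. There is a constant $c>0$ such that for all $N\in\mathbb N$, all $n\ge M_N$, all $0\le k\le N-1$, $k+1\le l\le N$ and all $x\in I_N^{k,l}$, $$\int_{I_N}\left|\frac1{Q_n}\sum_{j=M_N}^{n}q_{n-j}D_j(x-t)\right|d\mu(t)\le\frac{cM_lM_k}{M_N^2}.$$
   Context: Let $m=(m_0,m_1,\dots)$ be a bounded sequence of integers $m_k\ge 2$; $G_m=\prod_k Z_{m_k}$ (compact abelian group under coordinatewise addition mod $m_k$) with Haar probability measure $\mu$; $M_0=1$, $M_{k+1}=m_kM_k$, $n=\sum_j n_jM_j$ with $n_j\in Z_{m_j}$. $I_N=\{x: x_0=\dots=x_{N-1}=0\}$. For $0\le k<l<N$, $I_N^{k,l}$ is the set of $x\in G_m$ with $x_0=\dots=x_{k-1}=0$, $x_k\ne0$, $x_{k+1}=\dots=x_{l-1}=0$, $x_l\ne0$ (other coordinates arbitrary); for $0\le k<N$, $I_N^{k,N}$ is the set of $x$ with $x_0=\dots=x_{k-1}=0$, $x_k\ne 0$, $x_{k+1}=\dots=x_{N-1}=0$. $r_k(x)=\exp(2\pi i x_k/m_k)$, $\psi_n=\prod_k r_k^{n_k}$, $D_n=\sum_{k=0}^{n-1}\psi_k$, $Q_n=\sum_{k=0}^{n-1}q_k$. *)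

theory Defs
  imports "HOL-Probability.Probability"
begin

text \<open>Vilenkin group G_m: functions x :: nat => nat with x k < m k for all k;
  Haar probability measure = infinite product of uniform measures on Z_{m_k}.\<close>

definition vil_measure :: "(nat \<Rightarrow> nat) \<Rightarrow> (nat \<Rightarrow> nat) measure" where
  "vil_measure m = PiM UNIV (\<lambda>k. uniform_count_measure {..<m k})"

definition vil_G :: "(nat \<Rightarrow> nat) \<Rightarrow> (nat \<Rightarrow> nat) set" where
  "vil_G m = {x. \<forall>k. x k < m k}"

definition vil_M :: "(nat \<Rightarrow> nat) \<Rightarrow> nat \<Rightarrow> nat" where
  "vil_M m k = (\<Prod>i<k. m i)"

definition vil_digit :: "(nat \<Rightarrow> nat) \<Rightarrow> nat \<Rightarrow> nat \<Rightarrow> nat" where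
  "vil_digit m n k = (n div vil_M m k) mod m k"

definition vil_sub :: "(nat \<Rightarrow> nat) \<Rightarrow> (nat \<Rightarrow> nat) \<Rightarrow> (nat \<Rightarrow> nat) \<Rightarrow> (nat \<Rightarrow> nat)" where
  "vil_sub m x t = (\<lambda>k. nat ((int (x k) - int (t k)) mod int (m k)))"

definition vil_r :: "(nat \<Rightarrow> nat) \<Rightarrow> nat \<Rightarrow> (nat \<Rightarrow> nat) \<Rightarrow> complex" where
  "vil_r m k x = cis (2 * pi * real (x k) / real (m k))"

text \<open>psi_n = prod_k r_k^{n_k}; only finitely many digits are nonzero\<close>
definition vil_psi :: "(nat \<Rightarrow> nat) \<Rightarrow> nat \<Rightarrow> (nat \<Rightarrow> nat) \<Rightarrow> complex" where
  "vil_psi m n x = (\<Prod>k\<in>{k. vil_digit m n k \<noteq> 0}. vil_r m k x ^ vil_digit m n k)"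

definition vil_D :: "(nat \<Rightarrow> nat) \<Rightarrow> nat \<Rightarrow> (nat \<Rightarrow> nat) \<Rightarrow> complex" where
  "vil_D m n x = (\<Sum>k<n. vil_psi m k x)"

definition vil_I :: "(nat \<Rightarrow> nat) \<Rightarrow> nat \<Rightarrow> (nat \<Rightarrow> nat) set" where
  "vil_I m N = {x \<in> vil_G m. \<forall>i<N. x i = 0}"

definition vil_Ikl :: "(nat \<Rightarrow> nat) \<Rightarrow> nat \<Rightarrow> nat \<Rightarrow> nat \<Rightarrow> (nat \<Rightarrow> nat) set" where
  "vil_Ikl m N k l =
    (if l < N then
       {x \<in> vil_G m. (\<forall>i<k. x i = 0) \<and> x k \<noteq> 0 \<and> (\<forall>i. k < i \<and> i < l \<longrightarrow> x i = 0) \<and> x l \<noteq> 0}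
     else
       {x \<in> vil_G m. (\<forall>i<k. x i = 0) \<and> x k \<noteq> 0 \<and> (\<forall>i. k < i \<and> i < N \<longrightarrow> x i = 0)})"

end

theory Submission
  imports Defs
begin


lemma set_int_bound:
  fixes f :: "'a \<Rightarrow> real"
  assumes A: "A \<in> sets M" "emeasure M A \<noteq> \<infinity>" and b: "b \<ge> 0"
    and le: "\<And>x. x \<in> A \<Longrightarrow> f x \<le> b"
  shows "(LINT x:A|M. f x) \<le> measure M A * b"
proof (cases "set_integrable M A f")
  case True
  have ci: "set_integrable M A (\<lambda>_. b)"
    using A unfolding set_integrable_def
    by (intro integrable_indicator) (auto simp: less_top)
  have "(LINT x:A|M. f x) \<le> (LINT x:A|M. b)"
    by (rule set_integral_mono[OF True ci le])
  also have "\<dots> = measure M A * b" using set_integral_const[OF A, of b] by simp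
  finally show ?thesis .
next
  case False
  then have "(LINT x:A|M. f x) = 0"
    unfolding set_integrable_def set_lebesgue_integral_def
    by (rule not_integrable_integral_eq)
  then show ?thesis using b by simp
qed

lemma vil_I_emb:
  "vil_I m N = prod_emb UNIV (\<lambda>k. uniform_count_measure {..<m k}) {..<N} (Pi\<^sub>E {..<N} (\<lambda>_. {0}))"
  unfolding vil_I_def vil_G_def prod_emb_def
  apply (auto simp: space_uniform_count_measure PiE_iff restrict_def extensional_def fun_eq_iff)
  by (metis (full_types))

lemma mpos: fixes m :: "nat \<Rightarrow> nat" shows "(\<And>k. m k \<ge> 2) \<Longrightarrow> 0 < m k"
proof - assume "\<And>k. m k \<ge> 2" from this[of k] show ?thesis by linarith qed

lemma vil_I_sets:
  assumes "\<And>k. m k \<ge> 2" shows "vil_I m N \<in> sets (vil_measure m)"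
  unfolding vil_I_emb vil_measure_def
  by (intro measurable_prod_emb sets_PiM_I_finite) (auto simp: sets_uniform_count_measure intro: mpos[OF assms])

lemma vil_M_pos: assumes "\<And>k. m k \<ge> 2" shows "vil_M m N > 0"
  unfolding vil_M_def using mpos[OF assms] by (auto intro!: prod_pos)

lemma vil_I_emeasure:
  assumes m2: "\<And>k. m k \<ge> 2"
  shows "emeasure (vil_measure m) (vil_I m N) = ennreal (1 / real (vil_M m N))"
proof -
  have mp: "0 < m k" for k using m2[of k] by linarith
  have "emeasure (vil_measure m) (vil_I m N) = (\<Prod>i\<in>{..<N}. emeasure (uniform_count_measure {..<m i}) {0})"
    unfolding vil_I_emb vil_measure_def
    apply (rule emeasure_PiM_emb)
    using mp by (auto intro!: prob_space_uniform_count_measure simp: sets_uniform_count_measure)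
  also have "\<dots> = (\<Prod>i\<in>{..<N}. ennreal (1 / real (m i)))"
    apply (rule prod.cong, simp)
    apply (subst emeasure_uniform_count_measure) using mp
    by (auto simp: ennreal_of_nat_eq_real_of_nat divide_ennreal[symmetric])
  also have "\<dots> = ennreal (\<Prod>i\<in>{..<N}. 1 / real (m i))"
    by (simp add: prod_ennreal)
  also have "(\<Prod>i\<in>{..<N}. 1 / real (m i)) = 1 / real (vil_M m N)"
    unfolding vil_M_def by (simp add: prod_dividef)
  finally show ?thesis .
qed



lemma sum_lessThan_add_split:
  fixes g :: "nat \<Rightarrow> 'a::comm_monoid_add"
  shows "(\<Sum>j<a+b. g j) = (\<Sum>j<a. g j) + (\<Sum>j<b. g (a+j))"
  by (induction b) (simp_all add: add.assoc)

lemma sum_group: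
  fixes g :: "nat \<Rightarrow> 'a::comm_monoid_add"
  shows "(\<Sum>j<a*M. g j) = (\<Sum>a'<a. \<Sum>r<M. g (a'*M + r))"
proof -
  have "(\<Sum>j<a*M. g j) = (\<Sum>a'<a. sum g {a'*M..<a'*M+M})"
    by (rule sum.nat_group[symmetric])
  also have "\<dots> = (\<Sum>a'<a. \<Sum>r<M. g (a'*M + r))"
  proof (rule sum.cong, simp)
    fix a' show "sum g {a'*M..<a'*M+M} = (\<Sum>r<M. g (a'*M + r))"
      using sum.shift_bounds_nat_ivl[of g 0 "a'*M" M] by (simp add: atLeast0LessThan add.commute)
  qed
  finally show ?thesis .
qed

lemma abel_ineq:
  fixes d :: "nat \<Rightarrow> complex" and w :: "nat \<Rightarrow> real"
  assumes P: "\<And>i. a \<le> i \<Longrightarrow> i \<le> b \<Longrightarrow> norm (\<Sum>j=a..i. d j) \<le> K"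
    and wm: "\<And>i. a \<le> i \<Longrightarrow> i < b \<Longrightarrow> w (Suc i) \<le> w i"
    and wn: "\<And>i. a \<le> i \<Longrightarrow> i \<le> b \<Longrightarrow> 0 \<le> w i" and ab: "a \<le> b"
  shows "norm (\<Sum>j=a..b. of_real (w j) * d j) \<le> K * w a"
proof -
  have claim: "a + n \<le> b \<Longrightarrow> norm ((\<Sum>j=a..a+n. of_real (w j) * d j) - of_real (w (a+n)) * (\<Sum>j=a..a+n. d j))
      \<le> K * (w a - w (a+n))" for n
  proof (induction n)
    case 0 then show ?case by simp
  next
    case (Suc n)
    have IH: "norm ((\<Sum>j=a..a+n. of_real (w j) * d j) - of_real (w (a+n)) * (\<Sum>j=a..a+n. d j))
      \<le> K * (w a - w (a+n))" using Suc by simp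
    have Pn: "norm (\<Sum>j=a..a+n. d j) \<le> K" using P[of "a+n"] Suc.prems by simp
    have dw: "0 \<le> w (a+n) - w (Suc (a+n))" using wm[of "a+n"] Suc.prems by simp
    have eq: "(\<Sum>j=a..a+Suc n. of_real (w j) * d j) - of_real (w (a+Suc n)) * (\<Sum>j=a..a+Suc n. d j)
      = ((\<Sum>j=a..a+n. of_real (w j) * d j) - of_real (w (a+n)) * (\<Sum>j=a..a+n. d j))
        + of_real (w (a+n) - w (Suc (a+n))) * (\<Sum>j=a..a+n. d j)"
      by (simp add: algebra_simps)
    have "norm (of_real (w (a+n) - w (Suc (a+n))) * (\<Sum>j=a..a+n. d j)) \<le> (w (a+n) - w (Suc (a+n))) * K"
    proof -
      have "norm (of_real (w (a+n) - w (Suc (a+n))) * (\<Sum>j=a..a+n. d j)) = (w (a+n) - w (Suc (a+n))) * norm (\<Sum>j=a..a+n. d j)"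
        using dw by (simp add: norm_mult del: of_real_diff)
      then show ?thesis using dw Pn by (simp add: mult_left_mono)
    qed
    then have "norm ((\<Sum>j=a..a+Suc n. of_real (w j) * d j) - of_real (w (a+Suc n)) * (\<Sum>j=a..a+Suc n. d j))
       \<le> K * (w a - w (a+n)) + (w (a+n) - w (Suc (a+n))) * K"
      unfolding eq by (rule order.trans[OF norm_triangle_ineq add_mono[OF IH]])
    then show ?case by (simp add: algebra_simps)
  qed
  obtain n where bn: "b = a + n" using ab le_Suc_ex by blast
  have c: "norm ((\<Sum>j=a..b. of_real (w j) * d j) - of_real (w b) * (\<Sum>j=a..b. d j)) \<le> K * (w a - w b)"
    using claim[of n] bn by simp
  have "norm (of_real (w b) * (\<Sum>j=a..b. d j)) \<le> w b * K"
    using P[of b] ab wn[of b] by (simp add: norm_mult mult_left_mono)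
  have "norm (\<Sum>j=a..b. of_real (w j) * d j) \<le> K * (w a - w b) + w b * K"
  proof -
    let ?X = "(\<Sum>j=a..b. of_real (w j) * d j) - of_real (w b) * (\<Sum>j=a..b. d j)"
    have "(\<Sum>j=a..b. of_real (w j) * d j) = ?X + of_real (w b) * (\<Sum>j=a..b. d j)" by simp
    then show ?thesis using order.trans[OF norm_triangle_ineq add_mono[OF c \<open>norm (of_real (w b) * (\<Sum>j=a..b. d j)) \<le> w b * K\<close>]]
      by metis
  qed
  then show ?thesis by (simp add: algebra_simps)
qed

lemma q_block_bound:
  fixes q :: "nat \<Rightarrow> real"
  assumes qn: "\<And>k. q k \<ge> 0" and qm: "mono q" and SM: "S * M \<le> n"
  shows "(\<Sum>s\<in>{1..S}. real M * q (n - s * M)) \<le> (\<Sum>i\<in>{n - S*M..<n}. q i)"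
  using SM
proof (induction S)
  case 0 then show ?case by simp
next
  case (Suc S)
  have IH: "(\<Sum>s\<in>{1..S}. real M * q (n - s * M)) \<le> (\<Sum>i\<in>{n - S*M..<n}. q i)" using Suc by simp
  have blk: "real M * q (n - Suc S * M) \<le> (\<Sum>i\<in>{n - Suc S*M..<n - S*M}. q i)"
  proof -
    have "(\<Sum>i\<in>{n - Suc S*M..<n - S*M}. q (n - Suc S * M)) \<le> (\<Sum>i\<in>{n - Suc S*M..<n - S*M}. q i)"
      by (rule sum_mono) (auto intro: monoD[OF qm])
    moreover have "card {n - Suc S*M..<n - S*M} = M" using Suc.prems by simp
    ultimately show ?thesis by simp
  qed
  have "{n - Suc S*M..<n} = {n - Suc S*M..<n - S*M} \<union> {n - S*M..<n}" using Suc.prems by auto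
  then have "(\<Sum>i\<in>{n - Suc S*M..<n}. q i) = (\<Sum>i\<in>{n - Suc S*M..<n - S*M}. q i) + (\<Sum>i\<in>{n - S*M..<n}. q i)"
    by (simp add: sum.union_disjoint ivl_disj_int)
  then show ?case using IH blk by simp
qed

context
  fixes m :: "nat \<Rightarrow> nat"
  assumes m2: "\<And>k. m k \<ge> 2"
begin

lemma mp: "0 < m k" using m2[of k] by linarith

lemma M_Suc: "vil_M m (Suc k) = m k * vil_M m k"
  unfolding vil_M_def by (simp add: lessThan_Suc mult.commute)

lemma M_pos: "0 < vil_M m k"
  unfolding vil_M_def using mp by (auto intro!: prod_pos)

lemma M_factor: "p \<le> i \<Longrightarrow> vil_M m i = vil_M m p * (\<Prod>j\<in>{p..<i}. m j)"
  unfolding vil_M_def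
  by (metis atLeast0LessThan prod.atLeastLessThan_concat zero_le)

lemma M_ge_pow: "2 ^ k \<le> vil_M m k"
proof (induction k)
  case (Suc k) then show ?case using m2[of k] by (simp add: M_Suc mult_le_mono)
qed (simp add: vil_M_def)

lemma M_gt: "k < vil_M m k"
  using M_ge_pow[of k] less_exp[of k] by linarith

lemma M_mono: "p \<le> i \<Longrightarrow> vil_M m p \<le> vil_M m i"
proof -
  assume pi: "p \<le> i"
  have "0 < prod m {p..<i}" using mp by (simp add: prod_pos)
  then have "1 \<le> prod m {p..<i}" by linarith
  then have "vil_M m p * 1 \<le> vil_M m p * prod m {p..<i}" by (intro mult_le_mono2)
  then show ?thesis using M_factor[OF pi] by simp
qed

lemma digit_support: "vil_digit m n k \<noteq> 0 \<Longrightarrow> k < n"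
proof (rule ccontr)
  assume "vil_digit m n k \<noteq> 0" "\<not> k < n"
  then have "n < vil_M m k" using M_gt[of k] by linarith
  then have "n div vil_M m k = 0" by simp
  then show False using \<open>vil_digit m n k \<noteq> 0\<close> by (simp add: vil_digit_def)
qed

lemma digit_low: "r < vil_M m p \<Longrightarrow> p \<le> i \<Longrightarrow> vil_digit m r i = 0"
  unfolding vil_digit_def using M_mono[of p i] by simp

lemma digit_split:
  assumes r: "r < vil_M m p"
  shows "vil_digit m (a * vil_M m p + r) i = (if i < p then vil_digit m r i else vil_digit m (a * vil_M m p) i)"
proof (cases "i < p")
  case True
  define c where "c = m i * (\<Prod>j\<in>{Suc i..<p}. m j)"
  have Mp: "vil_M m p = vil_M m i * c"
    using M_factor[of "Suc i" p] True unfolding c_def by (simp add: M_Suc mult.assoc)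
  have "a * vil_M m p + r = r + (a * c) * vil_M m i" by (simp add: Mp ac_simps)
  then have "(a * vil_M m p + r) div vil_M m i = a * c + r div vil_M m i"
    using M_pos[of i] div_mult_self1[of "vil_M m i" r "a*c"] by (simp only:)
  moreover have "(a * c + r div vil_M m i) mod m i = (r div vil_M m i) mod m i"
    unfolding c_def by (simp add: mult.assoc[symmetric] mod_add_left_eq[symmetric])
  ultimately show ?thesis using True by (simp add: vil_digit_def)
next
  case False
  define d where "d = (\<Prod>j\<in>{p..<i}. m j)"
  have Mi: "vil_M m i = vil_M m p * d" using M_factor[of p i] False unfolding d_def by simp
  have "(a * vil_M m p + r) div vil_M m i = a div d"
    using r M_pos[of p] by (simp add: Mi div_mult2_eq)
  moreover have "(a * vil_M m p) div vil_M m i = a div d"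
    using M_pos[of p] by (simp add: Mi div_mult2_eq)
  ultimately show ?thesis using False by (simp add: vil_digit_def)
qed

lemma digit_high: "i < p \<Longrightarrow> vil_digit m (a * vil_M m p) i = 0"
  using digit_split[of 0 p a i] M_pos[of p] by (simp add: vil_digit_def)

lemma psi_support: "vil_psi m n y = (\<Prod>k\<in>{..<L}. vil_r m k y ^ vil_digit m n k)"
  if "\<And>k. L \<le> k \<Longrightarrow> vil_digit m n k = 0"
  unfolding vil_psi_def
proof (rule prod.mono_neutral_left)
  show "{k. vil_digit m n k \<noteq> 0} \<subseteq> {..<L}"
  proof
    fix k assume "k \<in> {k. vil_digit m n k \<noteq> 0}" then show "k \<in> {..<L}" using that[of k] by (cases "L \<le> k") auto
  qed
qed auto

lemma psi_split:
  assumes r: "r < vil_M m p"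
  shows "vil_psi m (a * vil_M m p + r) y = vil_psi m (a * vil_M m p) y * vil_psi m r y"
proof -
  define L where "L = p + a * vil_M m p + r + 1"
  have h: "\<And>n k. n < L \<Longrightarrow> L \<le> k \<Longrightarrow> vil_digit m n k = 0"
    using digit_support by fastforce
  have e1: "vil_psi m (a * vil_M m p + r) y = (\<Prod>k\<in>{..<L}. vil_r m k y ^ vil_digit m (a * vil_M m p + r) k)"
    by (rule psi_support) (rule h, auto simp: L_def)
  have e2: "vil_psi m (a * vil_M m p) y = (\<Prod>k\<in>{..<L}. vil_r m k y ^ vil_digit m (a * vil_M m p) k)"
    by (rule psi_support) (rule h, auto simp: L_def)
  have e3: "vil_psi m r y = (\<Prod>k\<in>{..<L}. vil_r m k y ^ vil_digit m r k)"
    by (rule psi_support) (rule h, auto simp: L_def)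
  have "(\<Prod>k\<in>{..<L}. vil_r m k y ^ vil_digit m (a * vil_M m p + r) k)
      = (\<Prod>k\<in>{..<L}. vil_r m k y ^ vil_digit m (a * vil_M m p) k * vil_r m k y ^ vil_digit m r k)"
    by (rule prod.cong) (auto simp: digit_split[OF r] digit_high digit_low[OF r])
  then show ?thesis by (simp add: e1 e2 e3 prod.distrib)
qed

lemma digit_cM: "c < m i \<Longrightarrow> vil_digit m (c * vil_M m i) k = (if k = i then c else 0)"
proof -
  assume c: "c < m i"
  consider "k < i" | "k = i" | "i < k" by linarith
  then show ?thesis
  proof cases
    case 1 then show ?thesis using digit_high by simp
  next
    case 2 then show ?thesis using c M_pos[of i] by (simp add: vil_digit_def)
  next
    case 3
    have "c * vil_M m i < vil_M m (Suc i)" using c M_pos[of i] by (simp add: M_Suc)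
    also have "\<dots> \<le> vil_M m k" using 3 M_mono by simp
    finally show ?thesis using 3 by (simp add: vil_digit_def)
  qed
qed

lemma psi_cM: "c < m i \<Longrightarrow> vil_psi m (c * vil_M m i) y = vil_r m i y ^ c"
proof -
  assume c: "c < m i"
  have "vil_psi m (c * vil_M m i) y = (\<Prod>k\<in>{..<Suc i}. vil_r m k y ^ vil_digit m (c * vil_M m i) k)"
    by (rule psi_support) (simp add: digit_cM[OF c])
  also have "\<dots> = vil_r m i y ^ c" by (simp add: digit_cM[OF c])
  finally show ?thesis .
qed

lemma norm_r: "norm (vil_r m k y) = 1" by (simp add: vil_r_def)

lemma norm_psi: "norm (vil_psi m n y) = 1"
  unfolding vil_psi_def by (simp add: prod_norm[symmetric] norm_power norm_r)

lemma norm_D: "norm (vil_D m n y) \<le> n"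
proof -
  have "norm (vil_D m n y) \<le> (\<Sum>k<n. norm (vil_psi m k y))" unfolding vil_D_def by (rule norm_sum)
  then show ?thesis by (simp add: norm_psi)
qed

lemma D_group: "vil_D m (a * vil_M m p) y = (\<Sum>a'<a. vil_psi m (a' * vil_M m p) y) * vil_D m (vil_M m p) y"
proof -
  have "vil_D m (a * vil_M m p) y = (\<Sum>a'<a. \<Sum>r<vil_M m p. vil_psi m (a' * vil_M m p) y * vil_psi m r y)"
    unfolding vil_D_def sum_group by (simp add: psi_split)
  also have "\<dots> = (\<Sum>a'<a. vil_psi m (a' * vil_M m p) y * vil_D m (vil_M m p) y)"
    unfolding vil_D_def by (simp add: sum_distrib_left)
  finally show ?thesis by (simp add: sum_distrib_right)
qed

lemma r_ne1:
  assumes "0 < y k" "y k < m k"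
  shows "vil_r m k y \<noteq> 1"
proof
  define \<theta> where "\<theta> = 2 * pi * real (y k) / real (m k)"
  assume "vil_r m k y = 1"
  then have "Re (vil_r m k y) = 1" by simp
  then have "cos \<theta> = 1" unfolding vil_r_def \<theta>_def by simp
  then obtain n :: int where n: "\<theta> = of_int n * 2 * pi" using cos_one_2pi_int by blast
  have mk: "real (m k) > 0" using mp[of k] by simp
  have "0 < \<theta>" using assms mk unfolding \<theta>_def by simp
  moreover have "\<theta> < 2 * pi" using assms mk unfolding \<theta>_def by (simp add: divide_less_eq)
  ultimately have "0 < real_of_int n" "real_of_int n < 1" using n pi_gt_zero
    by (simp_all add: zero_less_mult_iff)
  then have "0 < n" "n < 1" by simp_all
  then show False by simp
qed

lemma r_pow: "vil_r m k y ^ m k = 1"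
proof -
  have "vil_r m k y ^ m k = cis (real (m k) * (2 * pi * real (y k) / real (m k)))"
    unfolding vil_r_def by (rule Complex.DeMoivre)
  also have "\<dots> = cis (2 * pi * real (y k))" using mp[of k] by simp
  also have "\<dots> = 1" by (rule cis_multiple_2pi) simp
  finally show ?thesis .
qed

lemma geom_zero:
  assumes "0 < y k" "y k < m k"
  shows "(\<Sum>c<m k. vil_r m k y ^ c) = 0"
  using r_ne1[of y k, OF assms] r_pow by (simp add: sum_gp_strict)

lemma DM_zero_Suc:
  assumes "0 < y i" "y i < m i"
  shows "vil_D m (vil_M m (Suc i)) y = 0"
proof -
  have "vil_D m (vil_M m (Suc i)) y = vil_D m (m i * vil_M m i) y" by (simp add: M_Suc)
  also have "\<dots> = (\<Sum>c<m i. vil_psi m (c * vil_M m i) y) * vil_D m (vil_M m i) y" by (rule D_group)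
  also have "(\<Sum>c<m i. vil_psi m (c * vil_M m i) y) = (\<Sum>c<m i. vil_r m i y ^ c)"
    by (rule sum.cong) (simp_all add: psi_cM)
  finally show ?thesis using geom_zero[of y i, OF assms] by simp
qed

lemma DM_zero:
  assumes "i < p" "0 < y i" "y i < m i"
  shows "vil_D m (vil_M m p) y = 0"
proof -
  have "vil_M m p = (\<Prod>j\<in>{Suc i..<p}. m j) * vil_M m (Suc i)"
    using M_factor[of "Suc i" p] assms(1) by simp
  then show ?thesis using D_group[of "\<Prod>j\<in>{Suc i..<p}. m j" "Suc i" y] DM_zero_Suc[of y i, OF assms(2,3)] by simp
qed

lemma D_split:
  assumes D0: "vil_D m (vil_M m p) y = 0" and r: "r < vil_M m p"
  shows "vil_D m (a * vil_M m p + r) y = vil_psi m (a * vil_M m p) y * vil_D m r y"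
proof -
  have "vil_D m (a * vil_M m p + r) y = vil_D m (a * vil_M m p) y + (\<Sum>j<r. vil_psi m (a * vil_M m p + j) y)"
    unfolding vil_D_def by (rule sum_lessThan_add_split)
  also have "vil_D m (a * vil_M m p) y = 0" using D_group[of a p y] D0 by simp
  also have "(\<Sum>j<r. vil_psi m (a * vil_M m p + j) y) = vil_psi m (a * vil_M m p) y * vil_D m r y"
    unfolding vil_D_def sum_distrib_left
    by (rule sum.cong) (use r in \<open>simp_all add: psi_split\<close>)
  finally show ?thesis by simp
qed

lemma F_split:
  assumes D0: "vil_D m (vil_M m p) y = 0" and r: "r < vil_M m p"
  shows "(\<Sum>j<a * vil_M m p + r. vil_D m j y) =
    (\<Sum>a'<a. vil_psi m (a' * vil_M m p) y) * (\<Sum>j<vil_M m p. vil_D m j y)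
    + vil_psi m (a * vil_M m p) y * (\<Sum>j<r. vil_D m j y)"
proof -
  have "(\<Sum>j<a * vil_M m p + r. vil_D m j y) = (\<Sum>j<a * vil_M m p. vil_D m j y) + (\<Sum>j<r. vil_D m (a * vil_M m p + j) y)"
    by (rule sum_lessThan_add_split)
  also have "(\<Sum>j<a * vil_M m p. vil_D m j y) = (\<Sum>a'<a. \<Sum>j<vil_M m p. vil_D m (a' * vil_M m p + j) y)"
    by (rule sum_group)
  also have "\<dots> = (\<Sum>a'<a. vil_psi m (a' * vil_M m p) y * (\<Sum>j<vil_M m p. vil_D m j y))"
    by (intro sum.cong refl) (simp add: D_split[OF D0] sum_distrib_left)
  also have "(\<Sum>j<r. vil_D m (a * vil_M m p + j) y) = vil_psi m (a * vil_M m p) y * (\<Sum>j<r. vil_D m j y)"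
    unfolding sum_distrib_left by (rule sum.cong) (use r in \<open>simp_all add: D_split[OF D0]\<close>)
  finally show ?thesis by (simp add: sum_distrib_right)
qed

lemma D_bound:
  assumes "0 < y k" "y k < m k"
  shows "norm (vil_D m r y) \<le> vil_M m (Suc k)"
proof -
  have D0: "vil_D m (vil_M m (Suc k)) y = 0" by (rule DM_zero_Suc[of y k, OF assms])
  have lt: "r mod vil_M m (Suc k) < vil_M m (Suc k)" using M_pos by simp
  have "r = (r div vil_M m (Suc k)) * vil_M m (Suc k) + r mod vil_M m (Suc k)" by (metis div_mult_mod_eq)
  then have "vil_D m r y = vil_psi m ((r div vil_M m (Suc k)) * vil_M m (Suc k)) y * vil_D m (r mod vil_M m (Suc k)) y"
    by (metis D_split[OF D0 lt])
  then have "norm (vil_D m r y) = norm (vil_D m (r mod vil_M m (Suc k)) y)" by (simp add: norm_mult norm_psi)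
  also have "\<dots> \<le> r mod vil_M m (Suc k)" by (rule norm_D)
  finally show ?thesis using lt by linarith
qed

lemma F_crude:
  assumes "0 < y k" "y k < m k"
  shows "norm (\<Sum>j<R. vil_D m j y) \<le> real R * vil_M m (Suc k)"
proof -
  have "norm (\<Sum>j<R. vil_D m j y) \<le> (\<Sum>j<R. norm (vil_D m j y))" by (rule norm_sum)
  also have "\<dots> \<le> (\<Sum>j<R. real (vil_M m (Suc k)))" by (rule sum_mono) (rule D_bound[of y k, OF assms])
  finally show ?thesis by simp
qed

lemma F_bound:
  assumes k: "0 < y k" "y k < m k" and kl: "k < l" and l: "0 < y l" "y l < m l"
  shows "norm (\<Sum>j<R. vil_D m j y) \<le> real ((m l + 1) * vil_M m l * vil_M m (Suc k))"
proof -
  have Dl: "vil_D m (vil_M m l) y = 0" by (rule DM_zero[of k l y, OF kl k])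
  have Dl1: "vil_D m (vil_M m (Suc l)) y = 0" by (rule DM_zero_Suc[of y l, OF l])
  have FMl1: "(\<Sum>j<vil_M m (Suc l). vil_D m j y) = 0"
  proof -
    have "(\<Sum>j<vil_M m (Suc l). vil_D m j y) = (\<Sum>j<m l * vil_M m l + 0. vil_D m j y)" by (simp add: M_Suc)
    also have "\<dots> = (\<Sum>c<m l. vil_psi m (c * vil_M m l) y) * (\<Sum>j<vil_M m l. vil_D m j y)"
      using F_split[OF Dl, of 0 "m l"] M_pos by simp
    also have "(\<Sum>c<m l. vil_psi m (c * vil_M m l) y) = (\<Sum>c<m l. vil_r m l y ^ c)"
      by (rule sum.cong) (simp_all add: psi_cM)
    finally show ?thesis using geom_zero[of y l, OF l] by simp
  qed
  define r2 where "r2 = R mod vil_M m (Suc l)"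
  have r2lt: "r2 < vil_M m (Suc l)" unfolding r2_def using M_pos by simp
  have "R = (R div vil_M m (Suc l)) * vil_M m (Suc l) + r2" unfolding r2_def by (metis div_mult_mod_eq)
  then have "(\<Sum>j<R. vil_D m j y) = vil_psi m ((R div vil_M m (Suc l)) * vil_M m (Suc l)) y * (\<Sum>j<r2. vil_D m j y)"
    using F_split[OF Dl1 r2lt, of "R div vil_M m (Suc l)"] FMl1 by simp
  then have e1: "norm (\<Sum>j<R. vil_D m j y) = norm (\<Sum>j<r2. vil_D m j y)" by (simp add: norm_mult norm_psi)
  define c where "c = r2 div vil_M m l"
  define r1 where "r1 = r2 mod vil_M m l"
  have r1lt: "r1 < vil_M m l" unfolding r1_def using M_pos by simp
  have clt: "c < m l" using r2lt M_pos[of l] unfolding c_def by (simp add: M_Suc div_less_iff_less_mult mult.commute)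
  have "r2 = c * vil_M m l + r1" unfolding c_def r1_def by (metis div_mult_mod_eq)
  then have e2: "(\<Sum>j<r2. vil_D m j y) = (\<Sum>a'<c. vil_psi m (a' * vil_M m l) y) * (\<Sum>j<vil_M m l. vil_D m j y)
    + vil_psi m (c * vil_M m l) y * (\<Sum>j<r1. vil_D m j y)"
    using F_split[OF Dl r1lt, of c] by simp
  have n1: "norm (\<Sum>a'<c. vil_psi m (a' * vil_M m l) y) \<le> real c"
    using norm_sum[of "\<lambda>a'. vil_psi m (a' * vil_M m l) y" "{..<c}"] by (simp add: norm_psi)
  have n2: "norm (\<Sum>j<vil_M m l. vil_D m j y) \<le> real (vil_M m l) * vil_M m (Suc k)" by (rule F_crude[of y k, OF k])
  have n3: "norm (\<Sum>j<r1. vil_D m j y) \<le> real r1 * vil_M m (Suc k)" by (rule F_crude[of y k, OF k])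
  have "norm (\<Sum>j<r2. vil_D m j y) \<le> real c * (real (vil_M m l) * vil_M m (Suc k)) + real r1 * vil_M m (Suc k)"
  proof -
    let ?A = "(\<Sum>a'<c. vil_psi m (a' * vil_M m l) y)" and ?B = "(\<Sum>j<vil_M m l. vil_D m j y)"
      and ?P = "vil_psi m (c * vil_M m l) y" and ?E = "(\<Sum>j<r1. vil_D m j y)"
    have "norm (?A * ?B + ?P * ?E) \<le> norm (?A * ?B) + norm (?P * ?E)" by (rule norm_triangle_ineq)
    also have "\<dots> = norm ?A * norm ?B + norm ?E" by (simp add: norm_mult norm_psi)
    also have "\<dots> \<le> real c * (real (vil_M m l) * vil_M m (Suc k)) + real r1 * vil_M m (Suc k)"
      by (intro add_mono mult_mono n1 n2 n3) auto
    finally show ?thesis unfolding e2 .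
  qed
  also have "\<dots> \<le> real (m l) * (real (vil_M m l) * vil_M m (Suc k)) + real (vil_M m l) * vil_M m (Suc k)"
    using clt r1lt by (intro add_mono mult_right_mono) auto
  also have "\<dots> = real ((m l + 1) * vil_M m l * vil_M m (Suc k))" by (simp add: algebra_simps)
  finally show ?thesis using e1 by simp
qed

lemma block_partial:
  assumes D0: "vil_D m (vil_M m p) y = 0" and i: "s * vil_M m p \<le> i" "i < s * vil_M m p + vil_M m p"
  shows "(\<Sum>j=s * vil_M m p..i. vil_D m j y) = vil_psi m (s * vil_M m p) y * (\<Sum>j<Suc (i - s * vil_M m p). vil_D m j y)"
proof -
  have "(\<Sum>j=s * vil_M m p..i. vil_D m j y) = (\<Sum>r=0..i - s * vil_M m p. vil_D m (r + s * vil_M m p) y)"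
    using sum.shift_bounds_cl_nat_ivl[of "\<lambda>j. vil_D m j y" 0 "s * vil_M m p" "i - s * vil_M m p"] i by simp
  also have "\<dots> = (\<Sum>r<Suc (i - s * vil_M m p). vil_D m (s * vil_M m p + r) y)"
    by (simp add: atLeast0AtMost lessThan_Suc_atMost add.commute)
  also have "\<dots> = vil_psi m (s * vil_M m p) y * (\<Sum>j<Suc (i - s * vil_M m p). vil_D m j y)"
    unfolding sum_distrib_left by (rule sum.cong) (use i in \<open>simp_all add: D_split[OF D0]\<close>)
  finally show ?thesis .
qed

lemma sum_blocks:
  fixes q :: "nat \<Rightarrow> real"
  assumes D0: "vil_D m (vil_M m p) y = 0"
    and FK: "\<And>R. R \<le> vil_M m p \<Longrightarrow> norm (\<Sum>j<R. vil_D m j y) \<le> K0"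
    and qn: "\<And>k. q k \<ge> 0" and qm: "mono q"
  shows "S \<ge> 1 \<Longrightarrow> S * vil_M m p < e \<Longrightarrow> e \<le> S * vil_M m p + vil_M m p \<Longrightarrow> e \<le> Suc n \<Longrightarrow>
     norm (\<Sum>j\<in>{vil_M m p..<e}. of_real (q (n - j)) * vil_D m j y) \<le> K0 * (\<Sum>s\<in>{1..S}. q (n - s * vil_M m p))"
proof -
  let ?M = "vil_M m p"
  have block: "norm (\<Sum>j\<in>{s * ?M..<e}. of_real (q (n - j)) * vil_D m j y) \<le> K0 * q (n - s * ?M)"
    if se: "s * ?M < e" "e \<le> s * ?M + ?M" "e \<le> Suc n" for s e
  proof -
    have ee: "{s * ?M..<e} = {s * ?M..e - 1}" using se by auto
    show ?thesis unfolding ee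
    proof (rule abel_ineq)
      fix i assume "s * ?M \<le> i" "i \<le> e - 1"
      then have i: "s * ?M \<le> i" "i < s * ?M + ?M" using se by auto
      show "norm (\<Sum>j=s * ?M..i. vil_D m j y) \<le> K0"
        unfolding block_partial[OF D0 i] using FK[of "Suc (i - s * ?M)"] i
        by (simp add: norm_mult norm_psi)
    next
      fix i assume "s * ?M \<le> i" "i < e - 1"
      then show "q (n - Suc i) \<le> q (n - i)" by (intro monoD[OF qm]) simp
    qed (use se qn in auto)
  qed
  show "S \<ge> 1 \<Longrightarrow> S * ?M < e \<Longrightarrow> e \<le> S * ?M + ?M \<Longrightarrow> e \<le> Suc n \<Longrightarrow>
     norm (\<Sum>j\<in>{?M..<e}. of_real (q (n - j)) * vil_D m j y) \<le> K0 * (\<Sum>s\<in>{1..S}. q (n - s * ?M))"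
  proof (induction S arbitrary: e rule: nat_induct_at_least)
    case base
    then show ?case using block[of 1 e] by simp
  next
    case (Suc S)
    have Mp: "0 < ?M" by (rule M_pos)
    have split: "{?M..<e} = {?M..<Suc S * ?M} \<union> {Suc S * ?M..<e}" using Suc.prems Suc.hyps(1)
      by (auto simp: ivl_disj_un)
    have disj: "{?M..<Suc S * ?M} \<inter> {Suc S * ?M..<e} = {}" by auto
    have s1: "norm (\<Sum>j\<in>{?M..<Suc S * ?M}. of_real (q (n - j)) * vil_D m j y) \<le> K0 * (\<Sum>s\<in>{1..S}. q (n - s * ?M))"
      using Suc.IH[of "Suc S * ?M"] Suc.prems Mp by simp
    have s2: "norm (\<Sum>j\<in>{Suc S * ?M..<e}. of_real (q (n - j)) * vil_D m j y) \<le> K0 * q (n - Suc S * ?M)"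
      using block[of "Suc S" e] Suc.prems by simp
    have "norm (\<Sum>j\<in>{?M..<e}. of_real (q (n - j)) * vil_D m j y)
       \<le> norm (\<Sum>j\<in>{?M..<Suc S * ?M}. of_real (q (n - j)) * vil_D m j y) + norm (\<Sum>j\<in>{Suc S * ?M..<e}. of_real (q (n - j)) * vil_D m j y)"
      unfolding split sum.union_disjoint[OF finite_atLeastLessThan finite_atLeastLessThan disj] by (rule norm_triangle_ineq)
    also have "\<dots> \<le> K0 * (\<Sum>s\<in>{1..S}. q (n - s * ?M)) + K0 * q (n - Suc S * ?M)" using s1 s2 by simp
    also have "\<dots> = K0 * (\<Sum>s\<in>{1..Suc S}. q (n - s * ?M))" by (simp add: distrib_left)
    finally show ?case .
  qed
qed

lemma pointwise:
  fixes q :: "nat \<Rightarrow> real"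
  assumes B: "\<And>k. m k \<le> B" and qn: "\<And>k. q k \<ge> 0" and qm: "mono q" and q0: "q 0 > 0"
    and nM: "vil_M m N \<le> n" and kN: "k < N" and kl: "k + 1 \<le> l" "l \<le> N"
    and x: "x \<in> vil_Ikl m N k l" and t: "t \<in> vil_I m N"
  shows "norm ((1 / of_real (\<Sum>i<n. q i)) * (\<Sum>j=vil_M m N..n. of_real (q (n - j)) * vil_D m j (vil_sub m x t)))
     \<le> real ((B+1)*B* vil_M m l* vil_M m k) / real (vil_M m N)"
proof -
  define y where "y = vil_sub m x t"
  define M where "M = vil_M m N"
  define K0 where "K0 = real ((B+1)*B* vil_M m l* vil_M m k)"
  have xG: "x i < m i" for i using x unfolding vil_Ikl_def vil_G_def by (auto split: if_splits)
  have xk: "x k \<noteq> 0" using x unfolding vil_Ikl_def by (auto split: if_splits)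
  have xl: "l < N \<Longrightarrow> x l \<noteq> 0" using x unfolding vil_Ikl_def by (auto split: if_splits)
  have t0: "i < N \<Longrightarrow> t i = 0" for i using t unfolding vil_I_def by auto
  have yi: "i < N \<Longrightarrow> y i = x i" for i
    using t0[of i] xG[of i] unfolding y_def vil_sub_def by (simp add: of_nat_mod[symmetric] del: of_nat_mod)
  have yk: "0 < y k" "y k < m k" using yi[OF kN] xk xG[of k] by auto
  have Mk1: "vil_M m (Suc k) \<le> B * vil_M m k" using B[of k] by (simp add: M_Suc)
  have FK: "norm (\<Sum>j<R. vil_D m j y) \<le> K0" if R: "R \<le> M" for R
  proof (cases "l < N")
    case True
    have yl: "0 < y l" "y l < m l" using yi[OF True] xl[OF True] xG[of l] by auto
    have "norm (\<Sum>j<R. vil_D m j y) \<le> real ((m l + 1) * vil_M m l * vil_M m (Suc k))"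
      by (rule F_bound[of y k l, OF yk _ yl]) (use kl in simp)
    also have "(m l + 1) * vil_M m l * vil_M m (Suc k) \<le> (B + 1) * vil_M m l * (B * vil_M m k)"
      using B[of l] Mk1 by (intro mult_le_mono) auto
    finally show ?thesis unfolding K0_def by (simp add: algebra_simps)
  next
    case False
    then have lN: "l = N" using kl by simp
    have Mk1r: "real (vil_M m (Suc k)) \<le> real (B * vil_M m k)" using Mk1 by (simp only: of_nat_le_iff)
    have "norm (\<Sum>j<R. vil_D m j y) \<le> real R * vil_M m (Suc k)" by (rule F_crude[of y k, OF yk])
    also have "real R * vil_M m (Suc k) \<le> real M * real (B * vil_M m k)" using R Mk1r by (intro mult_mono) auto
    also have "\<dots> \<le> K0" unfolding K0_def M_def lN by (simp add: algebra_simps)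
    finally show ?thesis .
  qed
  have D0: "vil_D m M y = 0" unfolding M_def by (rule DM_zero[of k N y, OF kN yk])
  have Mp: "0 < M" unfolding M_def by (rule M_pos)
  define S where "S = n div M"
  have S1: "S \<ge> 1" unfolding S_def using nM Mp M_def by (simp add: div_greater_zero_iff Suc_le_eq)
  have SMn: "S * M \<le> n" unfolding S_def by (metis div_mult_mod_eq le_add1)
  have nSM: "Suc n \<le> S * M + M" unfolding S_def using Mp
    by (metis Suc_leI add.commute div_mult_mod_eq mod_less_divisor nat_add_left_cancel_less)
  have main: "norm (\<Sum>j\<in>{M..<Suc n}. of_real (q (n - j)) * vil_D m j y) \<le> K0 * (\<Sum>s\<in>{1..S}. q (n - s * M))"
    using sum_blocks[of N y K0 q S "Suc n" n, OF D0[unfolded M_def] FK[unfolded M_def] qn qm] S1 SMn nSM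
    unfolding M_def by simp
  define Q where "Q = (\<Sum>i<n. q i)"
  have Qpos: "0 < Q" unfolding Q_def using q0 qn Mp nM M_def
    by (metis gr0I le_zero_eq lessThan_iff ordered_comm_monoid_add_class.sum_pos2 finite_lessThan)
  have "(\<Sum>s\<in>{1..S}. real M * q (n - s * M)) \<le> (\<Sum>i\<in>{n - S*M..<n}. q i)"
    by (rule q_block_bound[OF qn qm SMn])
  also have "\<dots> \<le> Q" unfolding Q_def by (rule sum_mono2) (auto intro: qn)
  finally have sq: "(\<Sum>s\<in>{1..S}. q (n - s * M)) \<le> Q / real M"
    using Mp by (simp add: sum_distrib_left[symmetric] field_simps)
  have K0nn: "0 \<le> K0" unfolding K0_def by simp
  have "norm ((1 / of_real Q) * (\<Sum>j\<in>{M..<Suc n}. of_real (q (n - j)) * vil_D m j y))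
      = norm (\<Sum>j\<in>{M..<Suc n}. of_real (q (n - j)) * vil_D m j y) / Q"
    using Qpos by (simp add: norm_mult norm_divide)
  also have "\<dots> \<le> K0 * (Q / real M) / Q"
    using main sq K0nn Qpos by (intro divide_right_mono order.trans[OF main] mult_left_mono) auto
  also have "\<dots> = K0 / real M" using Qpos by simp
  finally show ?thesis unfolding y_def M_def Q_def K0_def atLeastLessThanSuc_atLeastAtMost .
qed

end

theorem mainTheorem7:
  fixes m :: "nat \<Rightarrow> nat" and q :: "nat \<Rightarrow> real"
  assumes m_ge2: "\<And>k. m k \<ge> 2"
    and m_bdd: "\<exists>B. \<forall>k. m k \<le> B"
    and q_nonneg: "\<And>k. q k \<ge> 0"
    and q_mono: "mono q"
    and q0: "q 0 > 0"
  shows "\<exists>c>0. \<forall>N n k l x.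
           vil_M m N \<le> n \<longrightarrow> k < N \<longrightarrow> k + 1 \<le> l \<longrightarrow> l \<le> N \<longrightarrow> x \<in> vil_Ikl m N k l \<longrightarrow>
           (LINT t:vil_I m N|vil_measure m.
              norm ((1 / of_real (\<Sum>i<n. q i)) *
                    (\<Sum>j=vil_M m N..n. of_real (q (n - j)) * vil_D m j (vil_sub m x t))))
           \<le> c * real (vil_M m l) * real (vil_M m k) / real (vil_M m N) ^ 2"
proof -
  obtain B where B: "\<And>k. m k \<le> B" using m_bdd by blast
  have B2: "2 \<le> B" using m_ge2[of 0] B[of 0] by linarith
  define c where "c = real ((B+1)*B)"
  have "0 < (B+1)*B" using B2 by simp
  then have cpos: "c > 0" unfolding c_def by (simp only: of_nat_0_less_iff)
  show ?thesis
  proof (intro exI[of _ c] conjI cpos allI impI)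
    fix N n k l x
    assume nM: "vil_M m N \<le> n" and kN: "k < N" and kl: "k + 1 \<le> l" and lN: "l \<le> N"
      and x: "x \<in> vil_Ikl m N k l"
    let ?b = "real ((B+1)*B * vil_M m l * vil_M m k) / real (vil_M m N)"
    have MNpos: "0 < vil_M m N" by (rule vil_M_pos[OF m_ge2])
    have "(LINT t:vil_I m N|vil_measure m.
              norm ((1 / of_real (\<Sum>i<n. q i)) *
                    (\<Sum>j=vil_M m N..n. of_real (q (n - j)) * vil_D m j (vil_sub m x t))))
        \<le> measure (vil_measure m) (vil_I m N) * ?b"
    proof (rule set_int_bound)
      show "vil_I m N \<in> sets (vil_measure m)" by (rule vil_I_sets[OF m_ge2])
      show "emeasure (vil_measure m) (vil_I m N) \<noteq> \<infinity>" by (simp add: vil_I_emeasure[OF m_ge2])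
      show "0 \<le> ?b" by simp
      fix t assume "t \<in> vil_I m N"
      then show "norm ((1 / of_real (\<Sum>i<n. q i)) *
                    (\<Sum>j=vil_M m N..n. of_real (q (n - j)) * vil_D m j (vil_sub m x t))) \<le> ?b"
        by (rule pointwise[OF m_ge2 B q_nonneg q_mono q0 nM kN kl lN x])
    qed
    also have "measure (vil_measure m) (vil_I m N) = 1 / real (vil_M m N)"
      unfolding measure_def by (simp add: vil_I_emeasure[OF m_ge2])
    also have "1 / real (vil_M m N) * ?b = c * real (vil_M m l) * real (vil_M m k) / real (vil_M m N) ^ 2"
      unfolding c_def by (simp add: power2_eq_square field_simps)
    finally show "(LINT t:vil_I m N|vil_measure m.
              norm ((1 / of_real (\<Sum>i<n. q i)) *
                    (\<Sum>j=vil_M m N..n. of_real (q (n - j)) * vil_D m j (vil_sub m x t))))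
           \<le> c * real (vil_M m l) * real (vil_M m k) / real (vil_M m N) ^ 2" .
  qed
qed

end
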